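(* Let $n,b$ be integers with $1<n<b$, let $C_0$ be a directed cycle of the $(n,b)$-mother graph $M$, and let $\Gamma_0$ be an edge-labelled subgraph of the $(n,b)$-Hoey-Sloane graph $\Gamma$. Then $\Gamma_0$ is the cycle image of $C_0$ if and only if $\overline{\Gamma}_0$ is the cycle image of $\overline{C}_0$.
   Context: Let $\lambda(x)$ denote the least non-negative residue of $x$ modulo $b$. The $(n,b)$-mother graph $M$ is the directed graph on vertex set $\{0,\ldots,b-1\}$ whose edges are the ordered pairs of digits $(d_1,d_2)$ with $\lambda(d_1+(b-n)d_2)\le n-1$; a directed cycle of $M$ (loops allowed) is regarded as its set of edges. The $(n,b)$-Hoey-Sloane graph $\Gamma$ is the edge-labelled directed graph on states $\{0,\ldots,n-1\}$ in which $(c_1,c_2)$ is an edge precisely when $\{(d_1,d_2)\in E(M)\mid n d_2-d_1+c_1=b c_2\}$ is nonempty, this set being its label set. For a digit $d$ put $\overline d=b-1-d$ and for a state $c$ put $\overline c=n-1-c$. The reflection of a cycle $C_0$ is $\overline{C}_0=\{(\overline{d}_1,\overline{d}_2)\mid (d_1,d_2)\in C_0\}$. The cycle image of a directed cycle $C_0$ of $M$ is the edge-labelled subgraph of $\Gamma$ whose edges are the pairs $(c_1,c_2)$ for which $\mathscr{E}=\{(d_1,d_2)\in C_0\mid n d_2-d_1+c_1=b c_2\}$ is nonempty, with label set $\mathscr{E}$, and whose vertices are the states that are endpoints of such edges. The reflection $\overline{\Gamma}_0$ of an edge-labelled subgraph $\Gamma_0$ of $\Gamma$ has vertices $\overline{c}$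 ($c$ a vertex of $\Gamma_0$), edges $(\overline{c}_1,\overline{c}_2)$ ($(c_1,c_2)$ an edge of $\Gamma_0$), and label $(\overline{d}_1,\overline{d}_2)$ on $(\overline{c}_1,\overline{c}_2)$ whenever $(d_1,d_2)$ labels $(c_1,c_2)$ in $\Gamma_0$. *)

theory Defs
  imports Main
begin

definition mother_edges :: "int \<Rightarrow> int \<Rightarrow> (int \<times> int) set" where
  "mother_edges n b = {(d1, d2). d1 \<in> {0..<b} \<and> d2 \<in> {0..<b} \<and>
      (d1 + (b - n) * d2) mod b \<le> n - 1}"

text \<open>A directed cycle of the mother graph (loops allowed), regarded as its edge set:
  distinct vertices v_0,...,v_{k-1} (k \<ge> 1) with edges (v_i, v_{i+1 mod k}).\<close>
definition mother_cycle :: "int \<Rightarrow> int \<Rightarrow> (int \<times> int) set \<Rightarrow> bool" where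
  "mother_cycle n b C \<longleftrightarrow> (\<exists>vs. vs \<noteq> [] \<and> distinct vs \<and> set vs \<subseteq> {0..<b} \<and>
      C = {(vs ! i, vs ! ((i + 1) mod length vs)) | i. i < length vs} \<and>
      C \<subseteq> mother_edges n b)"

text \<open>Edge-labelled graphs on integer states: (vertices, edges, label function);
  the label function is empty off the edge set.\<close>
type_synonym lgraph = "int set \<times> (int \<times> int) set \<times> (int \<times> int \<Rightarrow> (int \<times> int) set)"

definition HS_label :: "int \<Rightarrow> int \<Rightarrow> int \<times> int \<Rightarrow> (int \<times> int) set" where
  "HS_label n b e = (case e of (c1, c2) \<Rightarrow>
     if c1 \<in> {0..<n} \<and> c2 \<in> {0..<n}
     then {(d1, d2) \<in> mother_edges n b. n * d2 - d1 + c1 = b * c2} else {})"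

definition HS_edges :: "int \<Rightarrow> int \<Rightarrow> (int \<times> int) set" where
  "HS_edges n b = {e. HS_label n b e \<noteq> {}}"

definition HS_subgraph :: "int \<Rightarrow> int \<Rightarrow> lgraph \<Rightarrow> bool" where
  "HS_subgraph n b G \<longleftrightarrow> (case G of (V, E, L) \<Rightarrow>
     V \<subseteq> {0..<n} \<and> E \<subseteq> HS_edges n b \<and> (\<forall>(c1, c2) \<in> E. c1 \<in> V \<and> c2 \<in> V) \<and>
     (\<forall>e \<in> E. L e \<subseteq> HS_label n b e) \<and> (\<forall>e. e \<notin> E \<longrightarrow> L e = {}))"

definition cycle_image :: "int \<Rightarrow> int \<Rightarrow> (int \<times> int) set \<Rightarrow> lgraph" where
  "cycle_image n b C =
     (let L = (\<lambda>(c1, c2). if c1 \<in> {0..<n} \<and> c2 \<in> {0..<n}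
                  then {(d1, d2) \<in> C. n * d2 - d1 + c1 = b * c2} else {});
          E = {e. L e \<noteq> {}}
      in (fst ` E \<union> snd ` E, E, L))"

definition dbar :: "int \<Rightarrow> int \<Rightarrow> int" where "dbar b d = b - 1 - d"
definition cbar :: "int \<Rightarrow> int \<Rightarrow> int" where "cbar n c = n - 1 - c"

definition reflect_cycle :: "int \<Rightarrow> (int \<times> int) set \<Rightarrow> (int \<times> int) set" where
  "reflect_cycle b C = (\<lambda>(d1, d2). (dbar b d1, dbar b d2)) ` C"

definition reflect_graph :: "int \<Rightarrow> int \<Rightarrow> lgraph \<Rightarrow> lgraph" where
  "reflect_graph n b G = (case G of (V, E, L) \<Rightarrow>
     (cbar n ` V, (\<lambda>(c1, c2). (cbar n c1, cbar n c2)) ` E,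
      \<lambda>(c1', c2'). (\<lambda>(d1, d2). (dbar b d1, dbar b d2)) ` L (cbar n c1', cbar n c2')))"

end

theory Submission
  imports Defs
begin

lemma dm_inv: "(\<lambda>(d1, d2). (dbar b d1, dbar b d2)) ` (\<lambda>(d1, d2). (dbar b d1, dbar b d2)) ` A = A"
  by (force simp: dbar_def image_iff)

lemma cm_inv: "(\<lambda>(c1, c2). (cbar n c1, cbar n c2)) ` (\<lambda>(c1, c2). (cbar n c1, cbar n c2)) ` A = A"
  by (force simp: cbar_def image_iff)

lemma rg_inv: "reflect_graph n b (reflect_graph n b G) = G"
proof -
  obtain V E L where G: "G = (V, E, L)" by (cases G) auto
  have "cbar n ` cbar n ` V = V" by (force simp: cbar_def image_iff)
  moreover have "(\<lambda>(c1', c2'). (\<lambda>(d1, d2). (dbar b d1, dbar b d2)) `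
        (\<lambda>(c1', c2'). (\<lambda>(d1, d2). (dbar b d1, dbar b d2)) ` L (cbar n c1', cbar n c2')) (cbar n c1', cbar n c2')) = L"
    by (rule ext) (auto simp: dm_inv cbar_def)
  ultimately show ?thesis by (simp add: G reflect_graph_def cm_inv)
qed

lemma lab:
  "(\<lambda>(d1, d2). (dbar b d1, dbar b d2)) `
     (if cbar n c1 \<in> {0..<n} \<and> cbar n c2 \<in> {0..<n}
      then {(d1, d2) \<in> C. n * d2 - d1 + cbar n c1 = b * cbar n c2} else {})
   = (if c1 \<in> {0..<n} \<and> c2 \<in> {0..<n}
      then {(d1, d2) \<in> (\<lambda>(d1, d2). (dbar b d1, dbar b d2)) ` C. n * d2 - d1 + c1 = b * c2} else {})"
proof -
  have key: "n * dbar b d2 - dbar b d1 + c1 = b * c2 \<longleftrightarrow> n * d2 - d1 + cbar n c1 = b * cbar n c2"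
    for d1 d2 :: int
    by (simp add: dbar_def cbar_def algebra_simps) (smt (verit))
  have r: "cbar n c \<in> {0..<n} \<longleftrightarrow> c \<in> {0..<n}" for c by (auto simp: cbar_def)
  show ?thesis
    unfolding r using key by (auto simp: image_iff) (metis case_prod_conv)
qed

lemma comm: "reflect_graph n b (cycle_image n b C) = cycle_image n b (reflect_cycle b C)"
proof -
  define L where "L = (\<lambda>(c1, c2). if c1 \<in> {0..<n} \<and> c2 \<in> {0..<n}
                  then {(d1, d2) \<in> C. n * d2 - d1 + c1 = b * c2} else {})"
  define L' where "L' = (\<lambda>(c1, c2). if c1 \<in> {0..<n} \<and> c2 \<in> {0..<n}
                  then {(d1, d2) \<in> reflect_cycle b C. n * d2 - d1 + c1 = b * c2} else {})"
  let ?cm = "\<lambda>(c1, c2). (cbar n c1, cbar n c2)"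
  let ?dm = "\<lambda>(d1, d2). (dbar b d1, dbar b d2)"
  have LL: "(\<lambda>(c1', c2'). ?dm ` L (cbar n c1', cbar n c2')) = L'"
  proof (rule ext)
    fix x show "(\<lambda>(c1', c2'). ?dm ` L (cbar n c1', cbar n c2')) x = L' x"
      apply (cases x)
      unfolding L_def L'_def reflect_cycle_def split
      by (simp only: lab)
  qed
  have cc: "cbar n (cbar n c) = c" for c by (simp add: cbar_def)
  have EE: "?cm ` {e. L e \<noteq> {}} = {e. L' e \<noteq> {}}"
  proof -
    have "L' (c1, c2) = ?dm ` L (cbar n c1, cbar n c2)" for c1 c2
      using fun_cong[OF LL, of "(c1,c2)"] by simp
    hence ee: "L' e \<noteq> {} \<longleftrightarrow> L (?cm e) \<noteq> {}" for e by (cases e) auto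
    show ?thesis
    proof (intro set_eqI iffI)
      fix e assume "e \<in> ?cm ` {e. L e \<noteq> {}}"
      then obtain x where "L x \<noteq> {}" "e = ?cm x" by auto
      thus "e \<in> {e. L' e \<noteq> {}}" using ee[of e] by (cases x) (simp add: cc)
    next
      fix e assume "e \<in> {e. L' e \<noteq> {}}"
      hence "L (?cm e) \<noteq> {}" using ee[of e] by simp
      moreover have "e = ?cm (?cm e)" by (cases e) (simp add: cc)
      ultimately show "e \<in> ?cm ` {e. L e \<noteq> {}}" by blast
    qed
  qed
  have VV: "cbar n ` (fst ` E \<union> snd ` E) = fst ` (?cm ` E) \<union> snd ` (?cm ` E)" for E
    by (auto simp: image_iff) (force+)
  show ?thesis
    unfolding cycle_image_def Let_def reflect_graph_def
    apply (fold L_def L'_def)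
    apply (simp add: LL EE VV del: atLeastLessThan_iff)
    done
qed

theorem corollary13:
  fixes n b :: int and C0 :: "(int \<times> int) set" and G0 :: lgraph
  assumes "1 < n" and "n < b"
    and "mother_cycle n b C0"
    and "HS_subgraph n b G0"
  shows "G0 = cycle_image n b C0 \<longleftrightarrow>
         reflect_graph n b G0 = cycle_image n b (reflect_cycle b C0)"
  by (metis comm rg_inv)

end
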